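(* Let $G$ be an abelian group and $B=\bigoplus_{g\in G}B_g$ a $G$-graded integral domain of characteristic zero. Let $D\in \mathrm{HLND}(B)\setminus\{0\}$, let $A=\ker D$, and suppose that $G(A)=G(B)$. Then: (a) $\mathrm{HFrac}(B)=(\mathrm{HFrac}(A))^{(1)}$, i.e. $\mathrm{HFrac}(B)$ is a purely transcendental extension of $\mathrm{HFrac}(A)$ of transcendence degree $1$. (b) If $\mathbf{k}$ is a field included in $B$, then $\mathbf{k}\cap B_0$ is a field included in $\mathrm{HFrac}(A)$. (c) If $G$ is torsion-free and $\mathbf{k}$ is a field included in $B$, then $\mathbf{k}\subseteq \mathrm{HFrac}(A)$ and consequently $\mathrm{HFrac}(B)$ is ruled over $\mathbf{k}$.
   Context: A $G$-grading of a ring $B$ is a family of additive subgroups $\{B_g\}_{g\in G}$ with $B=\bigoplus_g B_g$ and $B_gB_h\subseteq B_{g+h}$. A derivation $D:B\to B$ is locally nilpotent if for each $b\in B$ some power $D^n(b)=0$; it is homogeneous if there is $h\in G$ with $D(B_g)\subseteq B_{g+h}$ for all $g$. $\mathrm{HLND}(B)$ denotes the set of homogeneous locally nilpotent derivations of $B$. For $D\in\mathrm{HLND}(B)$, $A=\ker D$ is a graded subring, i.e. $A=\bigoplus_g (A\cap B_g)$; write $A_g=A\cap B_g$. For a graded subring $A$ of $B$, $G(A)$ is the subgroup of $G$ generated by $\{g\in G: A_g\neq 0\}$. For a $G$-graded domain $B$, $\mathrm{HFrac}(B)$ (the homogeneous field of fractions) is the subfield of $\mathrm{Frac}(B)$ consisting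 of all fractions $b/s$ with $b\in B_i$, $s\in B_i\setminus\{0\}$ for some $i\in G$; for the graded subring $A$, $\mathrm{HFrac}(A)\subseteq\mathrm{HFrac}(B)$ is defined analogously. A field extension $L/\mathbf{k}$ is ruled if there is a field $K$ with $\mathbf{k}\subseteq K\subseteq L$ and $L=K^{(1)}$ (purely transcendental of transcendence degree $1$ over $K$). *)

theory Defs
  imports "HOL-Computational_Algebra.Fraction_Field" "HOL-Computational_Algebra.Polynomial"
begin

definition is_grading :: "('g::ab_group_add \<Rightarrow> 'b::comm_ring_1 set) \<Rightarrow> bool" where
  "is_grading Bg \<longleftrightarrow>
     (\<forall>g. 0 \<in> Bg g \<and> (\<forall>x\<in>Bg g. \<forall>y\<in>Bg g. x + y \<in> Bg g \<and> - x \<in> Bg g)) \<and>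
     (\<forall>b. \<exists>!c :: 'g \<Rightarrow> 'b. finite {g. c g \<noteq> 0} \<and> (\<forall>g. c g \<in> Bg g) \<and>
            b = (\<Sum>g\<in>{g. c g \<noteq> 0}. c g)) \<and>
     (\<forall>g h. \<forall>x\<in>Bg g. \<forall>y\<in>Bg h. x * y \<in> Bg (g + h))"

definition is_derivation :: "('b::comm_ring_1 \<Rightarrow> 'b) \<Rightarrow> bool" where
  "is_derivation D \<longleftrightarrow> (\<forall>x y. D (x + y) = D x + D y \<and> D (x * y) = x * D y + y * D x)"

definition locally_nilpotent :: "('b::comm_ring_1 \<Rightarrow> 'b) \<Rightarrow> bool" where
  "locally_nilpotent D \<longleftrightarrow> (\<forall>b. \<exists>n. (D ^^ n) b = 0)"

definition homogeneous_map :: "('g::ab_group_add \<Rightarrow> 'b set) \<Rightarrow> ('b \<Rightarrow> 'b) \<Rightarrow> bool" where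
  "homogeneous_map Bg D \<longleftrightarrow> (\<exists>h. \<forall>g. \<forall>x\<in>Bg g. D x \<in> Bg (g + h))"

definition HLND :: "('g::ab_group_add \<Rightarrow> 'b::comm_ring_1 set) \<Rightarrow> ('b \<Rightarrow> 'b) set" where
  "HLND Bg = {D. is_derivation D \<and> locally_nilpotent D \<and> homogeneous_map Bg D}"

definition gen_subgroup :: "'g::ab_group_add set \<Rightarrow> 'g set" where
  "gen_subgroup S = \<Inter>{H. 0 \<in> H \<and> (\<forall>x\<in>H. \<forall>y\<in>H. x - y \<in> H) \<and> S \<subseteq> H}"

text \<open>G(A) for a graded subring A of B (A_g = A \<inter> B_g).\<close>
definition Gsupp :: "('g::ab_group_add \<Rightarrow> 'b::zero set) \<Rightarrow> 'b set \<Rightarrow> 'g set" where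
  "Gsupp Bg A = gen_subgroup {g. \<exists>x \<in> A \<inter> Bg g. x \<noteq> 0}"

text \<open>Homogeneous field of fractions of the graded subring A (A = UNIV gives HFrac(B)).\<close>
definition HFrac :: "('g::ab_group_add \<Rightarrow> 'b::idom set) \<Rightarrow> 'b set \<Rightarrow> 'b fract set" where
  "HFrac Bg A = {Fraction_Field.Fract b s | b s i. b \<in> A \<inter> Bg i \<and> s \<in> A \<inter> Bg i \<and> s \<noteq> 0}"

definition is_subfield :: "'a::comm_ring_1 set \<Rightarrow> bool" where
  "is_subfield K \<longleftrightarrow> 0 \<in> K \<and> 1 \<in> K \<and>
     (\<forall>x\<in>K. \<forall>y\<in>K. x + y \<in> K \<and> x * y \<in> K \<and> - x \<in> K) \<and>
     (\<forall>x\<in>K. x \<noteq> 0 \<longrightarrow> (\<exists>y\<in>K. x * y = 1))"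

definition poly_over :: "'a::zero set \<Rightarrow> 'a poly \<Rightarrow> bool" where
  "poly_over K p \<longleftrightarrow> (\<forall>i. coeff p i \<in> K)"

definition purely_transcendental_deg1 :: "'a::field set \<Rightarrow> 'a set \<Rightarrow> bool" where
  "purely_transcendental_deg1 K L \<longleftrightarrow> K \<subseteq> L \<and>
     (\<exists>t\<in>L. (\<forall>p. poly_over K p \<and> poly p t = 0 \<longrightarrow> p = 0) \<and>
        L = {poly p t / poly q t | p q. poly_over K p \<and> poly_over K q \<and> poly q t \<noteq> 0})"

definition ruled :: "'a::field set \<Rightarrow> 'a set \<Rightarrow> bool" where
  "ruled k L \<longleftrightarrow> (\<exists>K. is_subfield K \<and> k \<subseteq> K \<and> K \<subseteq> L \<and> purely_transcendental_deg1 K L)"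

definition torsion_free_group :: "'g::ab_group_add itself \<Rightarrow> bool" where
  "torsion_free_group _ \<longleftrightarrow> (\<forall>(g::'g) (n::nat). n > 0 \<and> (((+) g) ^^ n) 0 = 0 \<longrightarrow> g = 0)"

end

theory Submission
  imports Defs
begin

locale graded =
  fixes Bg :: "'g::ab_group_add \<Rightarrow> 'b::{idom,ring_char_0} set"
  assumes grading: "is_grading Bg"
begin

lemma G1: "\<forall>g. 0 \<in> Bg g \<and> (\<forall>x\<in>Bg g. \<forall>y\<in>Bg g. x + y \<in> Bg g \<and> - x \<in> Bg g)"
  using grading unfolding is_grading_def by (elim conjE)

lemma G2: "\<forall>b. \<exists>!c :: 'g \<Rightarrow> 'b. finite {g. c g \<noteq> 0} \<and> (\<forall>g. c g \<in> Bg g) \<and>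
            b = (\<Sum>g\<in>{g. c g \<noteq> 0}. c g)"
  using grading unfolding is_grading_def by (elim conjE)

lemma G3: "\<forall>g h. \<forall>x\<in>Bg g. \<forall>y\<in>Bg h. x * y \<in> Bg (g + h)"
  using grading unfolding is_grading_def by (elim conjE)

lemma zero_in[simp]: "0 \<in> Bg g"
  using G1 by blast

lemma add_in: "x \<in> Bg g \<Longrightarrow> y \<in> Bg g \<Longrightarrow> x + y \<in> Bg g"
  using G1 by blast

lemma uminus_in: "x \<in> Bg g \<Longrightarrow> - x \<in> Bg g"
  using G1 by blast

lemma diff_in: "x \<in> Bg g \<Longrightarrow> y \<in> Bg g \<Longrightarrow> x - y \<in> Bg g"
  using add_in[of x g "-y"] uminus_in[of y g] by simp

lemma mult_in: "x \<in> Bg g \<Longrightarrow> y \<in> Bg h \<Longrightarrow> x * y \<in> Bg (g + h)"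
  using G3 by blast

lemma sum_in: "(\<And>s. s \<in> S \<Longrightarrow> f s \<in> Bg g) \<Longrightarrow> sum f S \<in> Bg g"
  by (induction S rule: infinite_finite_induct) (auto intro: add_in)

definition is_dec :: "'b \<Rightarrow> ('g \<Rightarrow> 'b) \<Rightarrow> bool" where
  "is_dec b c \<longleftrightarrow> finite {g. c g \<noteq> 0} \<and> (\<forall>g. c g \<in> Bg g) \<and> b = sum c {g. c g \<noteq> 0}"

lemma dec_ex1: "\<exists>!c. is_dec b c"
  unfolding is_dec_def using G2 by (rule spec)

definition hc :: "'b \<Rightarrow> 'g \<Rightarrow> 'b" where
  "hc b = (THE c. is_dec b c)"

lemma hc_dec: "is_dec b (hc b)"
  unfolding hc_def by (rule theI'[OF dec_ex1])

lemma hc_props: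
  "finite {g. hc b g \<noteq> 0} \<and> (\<forall>g. hc b g \<in> Bg g) \<and> b = sum (hc b) {g. hc b g \<noteq> 0}"
  using hc_dec[of b] unfolding is_dec_def .

lemma hc_in[simp]: "hc b g \<in> Bg g"
  using hc_props[of b] by (elim conjE) (erule spec)

lemma hc_finite: "finite {g. hc b g \<noteq> 0}"
  using hc_props[of b] by (elim conjE)

lemma hc_sum: "finite S \<Longrightarrow> {g. hc b g \<noteq> 0} \<subseteq> S \<Longrightarrow> b = sum (hc b) S"
proof -
  assume "finite S" "{g. hc b g \<noteq> 0} \<subseteq> S"
  then have "sum (hc b) S = sum (hc b) {g. hc b g \<noteq> 0}"
    by (intro sum.mono_neutral_right) auto
  then show ?thesis using hc_props[of b] by (elim conjE) simp
qed

lemma hc_unique: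
  assumes "finite S" "\<And>g. c g \<in> Bg g" "\<And>g. g \<notin> S \<Longrightarrow> c g = 0" "b = sum c S"
  shows "hc b = c"
proof -
  have sub: "{g. c g \<noteq> 0} \<subseteq> S" using assms(3) by blast
  then have fin: "finite {g. c g \<noteq> 0}" using assms(1) finite_subset by blast
  have "sum c S = sum c {g. c g \<noteq> 0}"
    using sub assms(1) by (intro sum.mono_neutral_right) auto
  then have P: "is_dec b c"
    unfolding is_dec_def using fin assms by auto
  have U: "\<And>c1 c2. is_dec b c1 \<Longrightarrow> is_dec b c2 \<Longrightarrow> c1 = c2"
    using dec_ex1[of b] by blast
  show ?thesis using U[OF hc_dec P] .
qed

lemma hc_hom: "x \<in> Bg i \<Longrightarrow> hc x = (\<lambda>g. if g = i then x else 0)"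
  by (rule hc_unique[of "{i}"]) auto

lemma hc_add: "hc (x + y) = (\<lambda>g. hc x g + hc y g)"
proof -
  let ?S = "{g. hc x g \<noteq> 0} \<union> {g. hc y g \<noteq> 0}"
  have fin: "finite ?S" using hc_finite by blast
  have "x = sum (hc x) ?S" "y = sum (hc y) ?S"
    using hc_sum[OF fin] by auto
  then have "x + y = (\<Sum>g\<in>?S. hc x g + hc y g)"
    by (simp add: sum.distrib)
  then show ?thesis
  proof (intro hc_unique[OF fin])
    fix g show "hc x g + hc y g \<in> Bg g" by (intro add_in hc_in)
  next
    fix g assume "g \<notin> {g. hc x g \<noteq> 0} \<union> {g. hc y g \<noteq> 0}"
    then show "hc x g + hc y g = 0" by simp
  qed
qed

lemma hc_zero: "hc 0 = (\<lambda>g. 0)"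
  using hc_hom[of 0 0] by auto

lemma hc_sum_fun: "hc (sum f S) = (\<lambda>g. \<Sum>s\<in>S. hc (f s) g)"
  by (induction S rule: infinite_finite_induct) (auto simp: hc_zero hc_add)

lemma hom_of_comp: "(\<And>g'. g' \<noteq> g \<Longrightarrow> hc X g' = 0) \<Longrightarrow> X \<in> Bg g"
proof -
  assume h: "\<And>g'. g' \<noteq> g \<Longrightarrow> hc X g' = 0"
  have "X = sum (hc X) {g}" by (rule hc_sum) (use h in auto)
  then have "X = hc X g" by simp
  then show ?thesis by (metis hc_in)
qed

lemma hc_mult_hom:
  assumes s: "s \<in> Bg j"
  shows "hc (X * s) = (\<lambda>g. hc X (g - j) * s)"
proof -
  let ?S = "{g. hc X g \<noteq> 0}"
  have fin: "finite ?S" by (rule hc_finite)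
  have "X = sum (hc X) ?S" by (rule hc_sum[OF fin]) simp
  then have "X * s = sum (hc X) ?S * s" by simp
  also have "\<dots> = (\<Sum>g\<in>?S. hc X g * s)" by (rule sum_distrib_right)
  also have "\<dots> = (\<Sum>g'\<in>(\<lambda>g. g + j) ` ?S. hc X (g' - j) * s)"
    by (subst sum.reindex) (auto simp: inj_on_def)
  finally have eq: "X * s = (\<Sum>g'\<in>(\<lambda>g. g + j) ` ?S. hc X (g' - j) * s)" .
  show ?thesis
  proof (rule hc_unique[OF _ _ _ eq])
    show "finite ((\<lambda>g. g + j) ` ?S)" using fin by simp
    fix g
    show "hc X (g - j) * s \<in> Bg g"
      using mult_in[OF hc_in s, of X "g - j"] by simp
    show "g \<notin> (\<lambda>g. g + j) ` ?S \<Longrightarrow> hc X (g - j) * s = 0"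
      by (auto simp: image_iff)
  qed
qed

lemma hom_cancel:
  assumes "X * s \<in> Bg i" "s \<in> Bg j" "s \<noteq> 0"
  shows "X \<in> Bg (i - j)"
proof (rule hom_of_comp)
  fix g assume g: "g \<noteq> i - j"
  have "hc (X * s) (g + j) = hc X g * s"
    using hc_mult_hom[OF assms(2)] by simp
  moreover have "hc (X * s) (g + j) = 0"
    using hc_hom[OF assms(1)] g by (auto simp: algebra_simps)
  ultimately show "hc X g = 0" using assms(3) by simp
qed

lemma one_in[simp]: "1 \<in> Bg 0"
proof -
  have "{g. hc 1 g \<noteq> 0} \<noteq> {}"
  proof
    assume "{g. hc 1 g \<noteq> 0} = {}"
    then have "(1::'b) = sum (hc 1) {}" by (intro hc_sum) auto
    then show False by simp
  qed
  then obtain g0 where g0: "hc 1 g0 \<noteq> 0" by blast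
  let ?e = "hc 1 g0"
  have "1 * ?e \<in> Bg g0" by simp
  from hom_cancel[OF this hc_in g0] show ?thesis by simp
qed

lemma hom_transfer:
  assumes "X * y \<in> Bg g" "y \<in> Bg k" "y \<noteq> 0" "z \<in> Bg k"
  shows "X * z \<in> Bg g"
  using mult_in[OF hom_cancel[OF assms(1-3)] assms(4)] by simp

lemma pow_in: "x \<in> Bg g \<Longrightarrow> \<exists>h. x ^ n \<in> Bg h"
proof (induction n)
  case 0 then show ?case using one_in by (metis power_0)
next
  case (Suc n)
  then obtain h where "x ^ n \<in> Bg h" by blast
  then have "x * x ^ n \<in> Bg (g + h)" using Suc.prems mult_in by blast
  then show ?case by auto
qed

end

definition gmul :: "nat \<Rightarrow> 'g::ab_group_add \<Rightarrow> 'g" where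
  "gmul n g = (((+) g) ^^ n) 0"

lemma gmul_0[simp]: "gmul 0 g = 0" by (simp add: gmul_def)
lemma gmul_Suc[simp]: "gmul (Suc n) g = g + gmul n g" by (simp add: gmul_def)
lemma gmul_add: "gmul (m + n) g = gmul m g + gmul n g"
  by (induction m) (auto simp: algebra_simps)
lemma gmul_plus: "gmul n (a + b) = gmul n a + gmul n b"
  by (induction n) (auto simp: algebra_simps)
lemma gmul_minus: "gmul n (- a) = - gmul n a"
  by (induction n) (auto simp: algebra_simps)
lemma gmul_mult: "gmul (m * n) g = gmul m (gmul n g)"
  by (induction m) (auto simp: gmul_add)

lemma pascal_sum:
  fixes F G :: "nat \<Rightarrow> 'a::comm_ring_1"
  shows "(\<Sum>k\<le>n. of_nat (n choose k) * (F (Suc k) * G (n - k) + F k * G (Suc (n - k))))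
       = (\<Sum>k\<le>Suc n. of_nat (Suc n choose k) * F k * G (Suc n - k))"
proof -
  have decomp: "{0..n+1} = {0} \<union> {n + 1} \<union> {1..n}" by auto
  have "(\<Sum>k\<le>n. of_nat (n choose k) * (F (Suc k) * G (n - k) + F k * G (Suc (n - k))))
     = (\<Sum>k\<le>n. of_nat (n choose k) * F (k+1) * G (n-k)) +
      (\<Sum>k\<le>n. of_nat (n choose k) * F k * G (n - k + 1))"
    by (simp add: sum.distrib[symmetric] algebra_simps)
  also have "\<dots> = (\<Sum>k\<le>n. of_nat (n choose k) * F k * G (n + 1 - k)) +
      (\<Sum>k=1..n+1. of_nat (n choose (k - 1)) * F k * G (n + 1 - k))"
    by (simp add: atMost_atLeast0 sum.shift_bounds_cl_Suc_ivl Suc_diff_le field_simps del: sum.cl_ivl_Suc)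
  also have "\<dots> = G (n + 1) * F 0 +
      (\<Sum>k=1..n. of_nat (n choose k) * F k * G (n + 1 - k)) + (F (n + 1) * G 0 +
      (\<Sum>k=1..n. of_nat (n choose (k - 1)) * F k * G (n + 1 - k)))"
    using sum.nat_ivl_Suc' [of 1 n "\<lambda>k. of_nat (n choose (k-1)) * F k * G (n + 1 - k)"]
    by (simp add: sum.atLeast_Suc_atMost atMost_atLeast0 algebra_simps)
  also have "\<dots> = F (n + 1) * G 0 + G (n + 1) * F 0 +
      (\<Sum>k=1..n. of_nat (n + 1 choose k) * F k * G (n + 1 - k))"
    by (auto simp add: field_simps sum.distrib [symmetric] choose_reduce_nat)
  also have "\<dots> = (\<Sum>k\<le>n+1. of_nat (n + 1 choose k) * F k * G (n + 1 - k))"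
    using decomp by (simp add: atMost_atLeast0 field_simps)
  finally show ?thesis by simp
qed

locale lnd = graded Bg for Bg :: "'g::ab_group_add \<Rightarrow> 'b::{idom,ring_char_0} set" +
  fixes D :: "'b \<Rightarrow> 'b"
  assumes D_hlnd: "D \<in> HLND Bg"
begin

lemma D_add: "D (x + y) = D x + D y"
  using D_hlnd unfolding HLND_def is_derivation_def by blast

lemma D_mult: "D (x * y) = x * D y + y * D x"
  using D_hlnd unfolding HLND_def is_derivation_def by blast

lemma D_lnd: "\<exists>n. (D ^^ n) x = 0"
  using D_hlnd unfolding HLND_def locally_nilpotent_def by blast

definition hD :: 'g where "hD = (SOME h. \<forall>g. \<forall>x\<in>Bg g. D x \<in> Bg (g + h))"

lemma D_in: "x \<in> Bg g \<Longrightarrow> D x \<in> Bg (g + hD)"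
proof -
  have "\<exists>h. \<forall>g. \<forall>x\<in>Bg g. D x \<in> Bg (g + h)"
    using D_hlnd unfolding HLND_def homogeneous_map_def by blast
  then have "\<forall>g. \<forall>x\<in>Bg g. D x \<in> Bg (g + hD)" unfolding hD_def by (rule someI_ex)
  then show "x \<in> Bg g \<Longrightarrow> D x \<in> Bg (g + hD)" by blast
qed

lemma Dn_in: "x \<in> Bg g \<Longrightarrow> (D ^^ n) x \<in> Bg (g + gmul n hD)"
proof (induction n)
  case 0 then show ?case by simp
next
  case (Suc n)
  then have "D ((D ^^ n) x) \<in> Bg (g + gmul n hD + hD)" by (intro D_in) simp
  then show ?case by (simp add: algebra_simps)
qed

lemma D_0[simp]: "D 0 = 0"
  using D_add[of 0 0] by simp

lemma D_1[simp]: "D 1 = 0"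
  using D_mult[of 1 1] by simp

lemma D_uminus: "D (- x) = - D x"
proof -
  have "D x + D (-x) = 0" using D_add[of x "-x"] by simp
  then show ?thesis by (simp add: add_eq_0_iff)
qed

lemma D_diff: "D (x - y) = D x - D y"
  using D_add[of x "-y"] D_uminus[of y] by simp

lemma D_sum: "D (sum f S) = (\<Sum>s\<in>S. D (f s))"
  by (induction S rule: infinite_finite_induct) (auto simp: D_add)

lemma D_of_nat[simp]: "D (of_nat n) = 0"
  by (induction n) (auto simp: D_add)

lemma D_const_mult: "D c = 0 \<Longrightarrow> D (c * x) = c * D x"
  by (simp add: D_mult)

lemma D_pow: "D (x ^ Suc n) = of_nat (Suc n) * x ^ n * D x"
proof (induction n)
  case 0 then show ?case by simp
next
  case (Suc n)
  have "D (x ^ Suc (Suc n)) = D (x * x ^ Suc n)" by simp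
  also have "\<dots> = x * D (x ^ Suc n) + x ^ Suc n * D x" by (rule D_mult)
  also have "\<dots> = of_nat (Suc (Suc n)) * x ^ Suc n * D x"
    using Suc by (simp add: algebra_simps)
  finally show ?case .
qed

lemma Dn_add: "(D ^^ n) (x + y) = (D ^^ n) x + (D ^^ n) y"
  by (induction n) (auto simp: D_add)

lemma Dn_diff: "(D ^^ n) (x - y) = (D ^^ n) x - (D ^^ n) y"
  by (induction n) (auto simp: D_diff)

lemma Dn_const_mult: "D c = 0 \<Longrightarrow> (D ^^ n) (c * x) = c * (D ^^ n) x"
  by (induction n) (auto simp: D_const_mult)

lemma Dn_zero[simp]: "(D ^^ n) 0 = 0"
  by (induction n) auto

lemma Dn_one: "(D ^^ Suc n) 1 = 0"
  by (induction n) auto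

lemma Dn_of_nat_mult: "(D ^^ n) (of_nat c * x) = of_nat c * (D ^^ n) x"
  by (rule Dn_const_mult) simp

lemma Dn_sum: "(D ^^ n) (sum f S) = (\<Sum>s\<in>S. (D ^^ n) (f s))"
  by (induction n) (auto simp: D_sum)

lemma leibniz:
  "(D ^^ n) (x * y) = (\<Sum>k\<le>n. of_nat (n choose k) * (D ^^ k) x * (D ^^ (n - k)) y)"
proof (induction n)
  case 0 then show ?case by simp
next
  case (Suc n)
  have "(D ^^ Suc n) (x * y) = D ((D ^^ n) (x * y))" by simp
  also have "\<dots> = (\<Sum>k\<le>n. D (of_nat (n choose k) * ((D ^^ k) x * (D ^^ (n - k)) y)))"
    unfolding Suc by (simp add: D_sum mult.assoc)
  also have "\<dots> = (\<Sum>k\<le>n. of_nat (n choose k) *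
      ((D ^^ Suc k) x * (D ^^ (n - k)) y + (D ^^ k) x * (D ^^ Suc (n - k)) y))"
    by (intro sum.cong refl) (simp add: D_const_mult D_mult algebra_simps)
  also have "\<dots> = (\<Sum>k\<le>Suc n. of_nat (Suc n choose k) * (D ^^ k) x * (D ^^ (Suc n - k)) y)"
    by (rule pascal_sum[where F = "\<lambda>k. (D ^^ k) x" and G = "\<lambda>k. (D ^^ k) y"])
  finally show ?case .
qed

lemma nu_ex: "x \<noteq> 0 \<Longrightarrow> \<exists>m. (D ^^ m) x \<noteq> 0 \<and> (D ^^ Suc m) x = 0"
proof -
  assume x: "x \<noteq> 0"
  obtain n where n: "(D ^^ n) x = 0" using D_lnd by blast
  let ?n = "LEAST n. (D ^^ n) x = 0"
  have 1: "(D ^^ ?n) x = 0" using n by (rule LeastI)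
  have "?n \<noteq> 0" using 1 x by (metis funpow_0)
  then obtain m where m: "?n = Suc m" using not0_implies_Suc by blast
  have "(D ^^ m) x \<noteq> 0" using not_less_Least[of m "\<lambda>n. (D ^^ n) x = 0"] m by auto
  then show ?thesis using 1 m by auto
qed

lemma Dn_high: "(D ^^ Suc m) x = 0 \<Longrightarrow> k > m \<Longrightarrow> (D ^^ k) x = 0"
proof -
  assume a: "(D ^^ Suc m) x = 0" "k > m"
  have k: "k = (k - Suc m) + Suc m" using a(2) by simp
  have "(D ^^ k) x = (D ^^ (k - Suc m)) ((D ^^ Suc m) x)"
    by (subst k, simp only: funpow_add o_apply)
  then show ?thesis using a(1) by simp
qed

lemma leibniz_top:
  assumes "(D ^^ Suc m) x = 0" "(D ^^ Suc n) y = 0"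
  shows "(D ^^ (m + n)) (x * y) = of_nat ((m + n) choose m) * (D ^^ m) x * (D ^^ n) y"
proof -
  have "(D ^^ (m + n)) (x * y) =
      (\<Sum>k\<le>m + n. of_nat ((m + n) choose k) * (D ^^ k) x * (D ^^ (m + n - k)) y)"
    by (rule leibniz)
  also have "\<dots> = of_nat ((m + n) choose m) * (D ^^ m) x * (D ^^ (m + n - m)) y
      + (\<Sum>k\<in>{..m + n} - {m}. of_nat ((m + n) choose k) * (D ^^ k) x * (D ^^ (m + n - k)) y)"
    by (rule sum.remove) auto
  also have "(\<Sum>k\<in>{..m + n} - {m}. of_nat ((m + n) choose k) * (D ^^ k) x * (D ^^ (m + n - k)) y) = 0"
  proof (rule sum.neutral, rule ballI)
    fix k assume k: "k \<in> {..m + n} - {m}"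
    show "of_nat ((m + n) choose k) * (D ^^ k) x * (D ^^ (m + n - k)) y = 0"
    proof (cases "k > m")
      case True then show ?thesis using Dn_high[OF assms(1)] by simp
    next
      case False
      then have "m + n - k > n" using k by auto
      then show ?thesis using Dn_high[OF assms(2)] by simp
    qed
  qed
  finally show ?thesis by simp
qed

lemma unit_ker:
  assumes "x * y = 1"
  shows "D x = 0"
proof -
  have x: "x \<noteq> 0" and y: "y \<noteq> 0" using assms by auto
  obtain m where m: "(D ^^ m) x \<noteq> 0" "(D ^^ Suc m) x = 0" using nu_ex[OF x] by blast
  obtain n where n: "(D ^^ n) y \<noteq> 0" "(D ^^ Suc n) y = 0" using nu_ex[OF y] by blast
  have "(D ^^ (m + n)) (x * y) = of_nat ((m + n) choose m) * (D ^^ m) x * (D ^^ n) y"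
    by (rule leibniz_top[OF m(2) n(2)])
  moreover have "of_nat ((m + n) choose m) * (D ^^ m) x * (D ^^ n) y \<noteq> 0"
    using m n by simp
  ultimately have "(D ^^ (m + n)) 1 \<noteq> 0" using assms by simp
  then have "m + n = 0" using Dn_one by (cases "m + n") auto
  then show ?thesis using m(2) by simp
qed

end

declare of_nat_fact[simp del]

context graded
begin

lemma pow_in_exact: "x \<in> Bg g \<Longrightarrow> x ^ n \<in> Bg (gmul n g)"
proof (induction n)
  case 0 then show ?case by simp
next
  case (Suc n)
  then have "x * x ^ n \<in> Bg (g + gmul n g)" using mult_in by blast
  then show ?case by simp
qed

lemma of_nat_in: "of_nat k \<in> Bg 0"
  by (induction k) (auto intro: add_in)

end

context lnd
begin

lemma ker_mult: "D x = 0 \<Longrightarrow> D y = 0 \<Longrightarrow> D (x * y) = 0"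
  by (simp add: D_mult)

lemma ker_add: "D x = 0 \<Longrightarrow> D y = 0 \<Longrightarrow> D (x + y) = 0"
  by (simp add: D_add)

lemma ker_pow: "D x = 0 \<Longrightarrow> D (x ^ n) = 0"
  by (induction n) (auto simp: ker_mult simp del: power_Suc, simp add: D_mult)

lemma ker_prod: "(\<And>s. s \<in> S \<Longrightarrow> D (f s) = 0) \<Longrightarrow> D (prod f S) = 0"
  by (induction S rule: infinite_finite_induct) (auto simp: ker_mult)

lemma exists_hom_nonker:
  assumes "D \<noteq> (\<lambda>_. 0)"
  shows "\<exists>f g. f \<in> Bg g \<and> D f \<noteq> 0"
proof -
  obtain b where b: "D b \<noteq> 0" using assms by blast
  let ?S = "{g. hc b g \<noteq> 0}"
  have "b = sum (hc b) ?S" by (rule hc_sum[OF hc_finite]) simp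
  then have "D b = (\<Sum>g\<in>?S. D (hc b g))" using D_sum by metis
  then obtain g where "D (hc b g) \<noteq> 0" using b by (metis (mono_tags, lifting) sum.neutral)
  then show ?thesis using hc_in by blast
qed

lemma exists_slice:
  assumes "D \<noteq> (\<lambda>_. 0)"
  shows "\<exists>r \<rho>. r \<in> Bg \<rho> \<and> D r \<noteq> 0 \<and> D (D r) = 0"
proof -
  obtain f g where f: "f \<in> Bg g" "D f \<noteq> 0" using exists_hom_nonker[OF assms] by blast
  have "f \<noteq> 0" using f by auto
  then obtain m where m: "(D ^^ m) f \<noteq> 0" "(D ^^ Suc m) f = 0" using nu_ex by blast
  have "m \<noteq> 0" using m f by (cases m) auto
  then obtain k where k: "m = Suc k" using not0_implies_Suc by blast
  let ?r = "(D ^^ k) f"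
  have "?r \<in> Bg (g + gmul k hD)" using Dn_in[OF f(1)] .
  moreover have "D ?r \<noteq> 0" using m k by simp
  moreover have "D (D ?r) = 0" using m k by simp
  ultimately show ?thesis by blast
qed

end

locale slice = lnd Bg D for Bg :: "'g::ab_group_add \<Rightarrow> 'b::{idom,ring_char_0} set" and D +
  fixes r :: 'b and \<rho> :: 'g
  assumes r_in: "r \<in> Bg \<rho>" and Dr_ne: "D r \<noteq> 0" and DDr: "D (D r) = 0"
begin

abbreviation "a \<equiv> D r"

lemma a_in: "a \<in> Bg (\<rho> + hD)" using D_in[OF r_in] .

lemma r_ne: "r \<noteq> 0" using Dr_ne by auto

lemma D_rpow: "D (r ^ Suc n) = of_nat (Suc n) * r ^ n * a"
  using D_pow[of r n] by simp

lemma Dk_rpow: "(D ^^ k) (r ^ (n + k)) * of_nat (fact n) = of_nat (fact (n + k)) * a ^ k * r ^ n"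
proof (induction k arbitrary: n)
  case 0 then show ?case by simp
next
  case (Suc k)
  have "(D ^^ Suc k) (r ^ (n + Suc k)) = (D ^^ k) (D (r ^ Suc (n + k)))"
    by (simp add: funpow_Suc_right del: funpow.simps)
  also have "\<dots> = (D ^^ k) ((of_nat (Suc (n + k)) * a) * r ^ (n + k))"
    by (subst D_rpow) (simp only: ac_simps)
  also have "\<dots> = (of_nat (Suc (n + k)) * a) * (D ^^ k) (r ^ (n + k))"
    by (rule Dn_const_mult) (simp add: D_mult D_add DDr)
  finally have "(D ^^ Suc k) (r ^ (n + Suc k)) * of_nat (fact n) =
     (of_nat (Suc (n + k)) * a) * ((D ^^ k) (r ^ (n + k)) * of_nat (fact n))"
    by (simp add: algebra_simps)
  also have "\<dots> = (of_nat (Suc (n + k)) * a) * (of_nat (fact (n + k)) * a ^ k * r ^ n)"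
    by (simp add: Suc.IH)
  also have "\<dots> = of_nat (fact (n + Suc k)) * a ^ Suc k * r ^ n"
    by (simp add: algebra_simps)
  finally show ?case .
qed

lemma Dm_rpow: "(D ^^ m) (r ^ m) = of_nat (fact m) * a ^ m"
  using Dk_rpow[of m 0] by simp

lemma slice_lemma:
  "(D ^^ n) b = 0 \<Longrightarrow> b \<in> Bg i \<Longrightarrow>
    \<exists>e \<epsilon> P. e \<in> Bg \<epsilon> \<and> D e = 0 \<and> e \<noteq> 0 \<and>
      (\<forall>j. D (coeff P j) = 0 \<and> coeff P j * r ^ j \<in> Bg (\<epsilon> + i)) \<and> e * b = poly P r"
proof (induction n arbitrary: b i)
  case 0
  then have "b = 0" by simp
  then show ?case
    by (intro exI[of _ 1] exI[of _ 0] exI[of _ 0]) simp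
next
  case (Suc m)
  let ?c = "(D ^^ m) b"
  have Dc: "D ?c = 0" using Suc.prems(1) by simp
  have c_in: "?c \<in> Bg (i + gmul m hD)" using Dn_in[OF Suc.prems(2)] .
  let ?b' = "of_nat (fact m) * a ^ m * b - ?c * r ^ m"
  let ?i' = "i + gmul m \<rho> + gmul m hD"
  have am_in: "a ^ m \<in> Bg (gmul m \<rho> + gmul m hD)"
    using pow_in_exact[OF a_in, of m] by (simp add: gmul_plus)
  have gg: "0 + (gmul m \<rho> + gmul m hD) + i = ?i'" by (simp add: algebra_simps)
  have "of_nat (fact m) * a ^ m * b \<in> Bg (0 + (gmul m \<rho> + gmul m hD) + i)"
    by (intro mult_in of_nat_in am_in Suc.prems(2))
  then have t1: "of_nat (fact m) * a ^ m * b \<in> Bg ?i'" by (simp only: gg)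
  have t2: "?c * r ^ m \<in> Bg ?i'"
    using mult_in[OF c_in pow_in_exact[OF r_in, of m]] by (simp add: algebra_simps)
  have b'_in: "?b' \<in> Bg ?i'" using diff_in[OF t1 t2] .
  have Da: "D a = 0" by (rule DDr)
  have e1: "(D ^^ m) (of_nat (fact m) * a ^ m * b) = of_nat (fact m) * a ^ m * ?c"
    by (rule Dn_const_mult) (simp add: ker_mult ker_pow Da del: of_nat_fact)
  have e2: "(D ^^ m) (?c * r ^ m) = ?c * (of_nat (fact m) * a ^ m)"
    using Dn_const_mult[OF Dc, of m "r ^ m"] Dm_rpow by simp
  have "(D ^^ m) ?b' = of_nat (fact m) * a ^ m * ?c - ?c * (of_nat (fact m) * a ^ m)"
    unfolding Dn_diff e1 e2 ..
  then have "(D ^^ m) ?b' = 0" by simp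
  from Suc.IH[OF this b'_in] obtain e' \<epsilon>' P' where IH:
    "e' \<in> Bg \<epsilon>'" "D e' = 0" "e' \<noteq> 0"
    "\<And>j. D (coeff P' j) = 0 \<and> coeff P' j * r ^ j \<in> Bg (\<epsilon>' + ?i')" "e' * ?b' = poly P' r"
    by blast
  let ?e = "e' * of_nat (fact m) * a ^ m"
  let ?\<epsilon> = "\<epsilon>' + (gmul m \<rho> + gmul m hD)"
  let ?P = "P' + monom (e' * ?c) m"
  have "?e \<in> Bg (\<epsilon>' + 0 + (gmul m \<rho> + gmul m hD))"
    by (intro mult_in of_nat_in am_in IH(1))
  then have e_in: "?e \<in> Bg ?\<epsilon>" by (simp only: add_0_right)
  have De: "D ?e = 0" using IH(2) Da by (simp add: ker_mult ker_pow)
  have e_ne: "?e \<noteq> 0" using IH(3) Dr_ne by simp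
  have coeffs: "D (coeff ?P j) = 0 \<and> coeff ?P j * r ^ j \<in> Bg (?\<epsilon> + i)" for j
  proof
    show "D (coeff ?P j) = 0" using IH(4)[of j] IH(2) Dc by (cases "m = j") (auto simp: D_add ker_mult)
    have A1: "coeff P' j * r ^ j \<in> Bg (?\<epsilon> + i)"
      using IH(4)[of j] by (simp add: algebra_simps)
    have A2: "e' * ?c * r ^ m \<in> Bg (?\<epsilon> + i)"
      using mult_in[OF IH(1) t2] by (simp add: algebra_simps)
    show "coeff ?P j * r ^ j \<in> Bg (?\<epsilon> + i)"
      using A1 A2 by (auto simp: distrib_right intro: add_in)
  qed
  have "?e * b = e' * ?b' + e' * ?c * r ^ m" by (simp add: algebra_simps)
  also have "\<dots> = poly ?P r" using IH(5) by (simp add: poly_monom)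
  finally show ?case using e_in De e_ne coeffs by blast
qed

lemma D_poly:
  "(\<And>j. D (coeff P j) = 0) \<Longrightarrow> D (poly P r) = poly (pderiv P) r * a"
proof (induction P rule: pCons_induct)
  case 0 then show ?case by simp
next
  case (pCons c p)
  have Dc: "D c = 0" using pCons.prems[of 0] by simp
  have "\<And>j. D (coeff p j) = 0" using pCons.prems[of "Suc _"] by simp
  then have IH: "D (poly p r) = poly (pderiv p) r * a" by (rule pCons.IH)
  show ?case using Dc IH by (simp add: D_add D_mult pderiv_pCons algebra_simps)
qed

lemma transcendental:
  "(\<And>j. D (coeff P j) = 0) \<Longrightarrow> poly P r = 0 \<Longrightarrow> P = 0"
proof (induction "degree P" arbitrary: P rule: less_induct)
  case less
  show ?case
  proof (cases "degree P = 0")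
    case True
    then have "P = [:coeff P 0:]" by (metis degree_0_id)
    then show ?thesis using less.prems(2) by (metis poly_pCons mult_zero_right poly_0 add_0_right pCons_0_0)
  next
    case False
    have cd: "D (coeff (pderiv P) j) = 0" for j
      using less.prems(1)[of "Suc j"] by (simp add: coeff_pderiv D_mult D_add)
    have "poly (pderiv P) r * a = 0" using D_poly[OF less.prems(1)] less.prems(2) by simp
    then have "poly (pderiv P) r = 0" using Dr_ne by simp
    moreover have "degree (pderiv P) < degree P" using False by (simp add: degree_pderiv)
    ultimately have "pderiv P = 0" using less.hyps cd by blast
    then show ?thesis using False by (simp add: pderiv_eq_0_iff)
  qed
qed

end

definition fr :: "'b::idom \<Rightarrow> 'b fract" where "fr x = Fraction_Field.Fract x 1"

lemma fr_add: "fr (x + y) = fr x + fr y" by (simp add: fr_def)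
lemma fr_mult: "fr (x * y) = fr x * fr y" by (simp add: fr_def)
lemma fr_0[simp]: "fr 0 = 0" by (simp add: fr_def fract_collapse)
lemma fr_1[simp]: "fr 1 = 1" by (simp add: fr_def fract_collapse)
lemma fr_minus: "fr (- x) = - fr x" by (simp add: fr_def)
lemma fr_diff: "fr (x - y) = fr x - fr y" by (simp add: fr_def)
lemma fr_pow: "fr (x ^ n) = fr x ^ n" by (induction n) (auto simp: fr_mult)
lemma fr_eq_iff[simp]: "fr x = fr y \<longleftrightarrow> x = y" by (simp add: fr_def eq_fract)
lemma fr_eq_0_iff[simp]: "fr x = 0 \<longleftrightarrow> x = 0" using fr_eq_iff[of x 0] by simp
lemma fr_sum: "fr (sum f S) = (\<Sum>s\<in>S. fr (f s))"
  by (induction S rule: infinite_finite_induct) (auto simp: fr_add)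
lemma fr_prod: "fr (prod f S) = (\<Prod>s\<in>S. fr (f s))"
  by (induction S rule: infinite_finite_induct) (auto simp: fr_mult)
lemma Fract_div: "y \<noteq> 0 \<Longrightarrow> Fraction_Field.Fract x y = fr x / fr y"
  by (simp add: fr_def)

lemma poly_sum_le:
  fixes x :: "'a::{comm_semiring_0,semiring_1}"
  assumes "degree P \<le> N"
  shows "poly P x = (\<Sum>j\<le>N. coeff P j * x ^ j)"
proof -
  have "poly P x = (\<Sum>j\<le>degree P. coeff P j * x ^ j)" by (rule poly_altdef)
  also have "\<dots> = (\<Sum>j\<le>N. coeff P j * x ^ j)"
    using assms by (intro sum.mono_neutral_left) (auto simp: coeff_eq_0)
  finally show ?thesis .
qed

lemma coeff_sum_monom_gen:
  "coeff (\<Sum>j\<le>N. monom (f j) j) n = (if n \<le> N then f n else 0)"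
  by (simp add: coeff_sum)

context graded
begin

lemma HFrac_memI:
  "b \<in> S \<Longrightarrow> s \<in> S \<Longrightarrow> b \<in> Bg i \<Longrightarrow> s \<in> Bg i \<Longrightarrow> s \<noteq> 0 \<Longrightarrow> Fraction_Field.Fract b s \<in> HFrac Bg S"
  unfolding HFrac_def by blast

lemma HFrac_memE:
  assumes "x \<in> HFrac Bg S"
  obtains b s i where "x = Fraction_Field.Fract b s" "b \<in> S" "s \<in> S" "b \<in> Bg i" "s \<in> Bg i" "s \<noteq> 0"
  using assms unfolding HFrac_def by blast

lemma HFrac_field:
  assumes S0: "0 \<in> S" and S1: "1 \<in> S"
    and Sadd: "\<And>x y. x \<in> S \<Longrightarrow> y \<in> S \<Longrightarrow> x + y \<in> S"
    and Smult: "\<And>x y. x \<in> S \<Longrightarrow> y \<in> S \<Longrightarrow> x * y \<in> S"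
    and Sneg: "\<And>x. x \<in> S \<Longrightarrow> - x \<in> S"
  shows "is_subfield (HFrac Bg S)"
    and "\<And>x. x \<in> HFrac Bg S \<Longrightarrow> inverse x \<in> HFrac Bg S"
proof -
  have zero: "0 \<in> HFrac Bg S"
    using HFrac_memI[OF S0 S1 zero_in one_in] by (simp add: fract_collapse)
  have one: "1 \<in> HFrac Bg S"
    using HFrac_memI[OF S1 S1 one_in one_in] by (simp add: fract_collapse)
  have add: "x + y \<in> HFrac Bg S" if hx: "x \<in> HFrac Bg S" and hy: "y \<in> HFrac Bg S" for x y
  proof -
    obtain b s i where 1: "x = Fraction_Field.Fract b s" "b \<in> S" "s \<in> S" "b \<in> Bg i" "s \<in> Bg i" "s \<noteq> 0"
      using hx by (rule HFrac_memE)
    obtain b' s' i' where 2: "y = Fraction_Field.Fract b' s'" "b' \<in> S" "s' \<in> S" "b' \<in> Bg i'" "s' \<in> Bg i'" "s' \<noteq> 0"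
      using hy by (rule HFrac_memE)
    have "x + y = Fraction_Field.Fract (b * s' + b' * s) (s * s')" using 1 2 by simp
    moreover have "b * s' + b' * s \<in> Bg (i + i')"
      using mult_in[OF 1(4) 2(5)] mult_in[OF 2(4) 1(5)] by (intro add_in) (auto simp: add.commute)
    moreover have "s * s' \<in> Bg (i + i')" using mult_in[OF 1(5) 2(5)] .
    moreover have "b * s' + b' * s \<in> S" using 1 2 by (intro Sadd Smult) auto
    moreover have "s * s' \<in> S" using 1 2 by (intro Smult) auto
    moreover have "s * s' \<noteq> 0" using 1 2 by simp
    ultimately show ?thesis using HFrac_memI by metis
  qed
  have mult: "x * y \<in> HFrac Bg S" if hx: "x \<in> HFrac Bg S" and hy: "y \<in> HFrac Bg S" for x y
  proof -
    obtain b s i where 1: "x = Fraction_Field.Fract b s" "b \<in> S" "s \<in> S" "b \<in> Bg i" "s \<in> Bg i" "s \<noteq> 0"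
      using hx by (rule HFrac_memE)
    obtain b' s' i' where 2: "y = Fraction_Field.Fract b' s'" "b' \<in> S" "s' \<in> S" "b' \<in> Bg i'" "s' \<in> Bg i'" "s' \<noteq> 0"
      using hy by (rule HFrac_memE)
    have "x * y = Fraction_Field.Fract (b * b') (s * s')" using 1 2 by simp
    moreover have "b * b' \<in> Bg (i + i')" using mult_in[OF 1(4) 2(4)] .
    moreover have "s * s' \<in> Bg (i + i')" using mult_in[OF 1(5) 2(5)] .
    moreover have "b * b' \<in> S" using 1 2 by (intro Smult) auto
    moreover have "s * s' \<in> S" using 1 2 by (intro Smult) auto
    moreover have "s * s' \<noteq> 0" using 1 2 by simp
    ultimately show ?thesis using HFrac_memI by metis
  qed
  have neg: "- x \<in> HFrac Bg S" if hx: "x \<in> HFrac Bg S" for x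
  proof -
    obtain b s i where 1: "x = Fraction_Field.Fract b s" "b \<in> S" "s \<in> S" "b \<in> Bg i" "s \<in> Bg i" "s \<noteq> 0"
      using hx by (rule HFrac_memE)
    then show ?thesis using HFrac_memI[of "-b" S s i] Sneg uminus_in by simp
  qed
  have inv: "inverse x \<in> HFrac Bg S" if hx: "x \<in> HFrac Bg S" for x
  proof -
    obtain b s i where 1: "x = Fraction_Field.Fract b s" "b \<in> S" "s \<in> S" "b \<in> Bg i" "s \<in> Bg i" "s \<noteq> 0"
      using hx by (rule HFrac_memE)
    show ?thesis
    proof (cases "b = 0")
      case True
      then show ?thesis using 1 zero by (simp add: fract_collapse)
    next
      case False
      then show ?thesis using 1 HFrac_memI[of s S b i] by simp
    qed
  qed
  show "is_subfield (HFrac Bg S)"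
    unfolding is_subfield_def
  proof (intro conjI ballI impI zero one add mult neg)
    fix x assume "x \<in> HFrac Bg S" "x \<noteq> 0"
    then show "\<exists>y\<in>HFrac Bg S. x * y = 1" using inv by (intro bexI[of _ "inverse x"]) auto
  qed
  show "\<And>x. x \<in> HFrac Bg S \<Longrightarrow> inverse x \<in> HFrac Bg S" by (rule inv)
qed

end

lemma fid1:
  fixes C :: "'a::field"
  assumes "C \<noteq> 0" "j \<le> N"
  shows "(E * X * C ^ j * Dd ^ (N - j)) / W * (R * Dd / C) ^ j = E * Dd ^ N / W * (X * R ^ j)"
proof -
  have "Dd ^ N = Dd ^ (N - j) * Dd ^ j" using assms(2) by (simp add: power_add[symmetric])
  then show ?thesis using assms(1) by (simp add: power_mult_distrib power_divide field_simps)
qed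

lemma fid2:
  fixes C :: "'a::field"
  assumes "C \<noteq> 0" "j \<le> n"
  shows "(Y * cp) * Dd ^ j * C ^ (n - j) * R ^ j = Y * C ^ n * (cp * (R * Dd / C) ^ j)"
proof -
  have "C ^ n = C ^ (n - j) * C ^ j" using assms(2) by (simp add: power_add[symmetric])
  then show ?thesis using assms(1) by (simp add: power_mult_distrib power_divide field_simps)
qed

locale mainloc = slice Bg D r \<rho> for Bg :: "'g::ab_group_add \<Rightarrow> 'b::{idom,ring_char_0} set" and D r \<rho> +
  fixes c d :: 'b and \<gamma> \<delta> :: 'g
  assumes c_in: "c \<in> Bg \<gamma>" and d_in: "d \<in> Bg \<delta>" and Dc: "D c = 0" and Dd: "D d = 0"
    and c_ne: "c \<noteq> 0" and d_ne: "d \<noteq> 0" and rho_eq: "\<rho> = \<gamma> - \<delta>"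
begin

abbreviation "KK \<equiv> HFrac Bg {b. D b = 0}"
abbreviation "LL \<equiv> HFrac Bg UNIV"

definition t :: "'b fract" where "t = Fraction_Field.Fract (r * d) c"

lemma t_eq: "t = fr (r * d) / fr c"
  unfolding t_def using c_ne by (rule Fract_div)

lemma K_field: "is_subfield KK" and K_inv: "x \<in> KK \<Longrightarrow> inverse x \<in> KK"
  by (rule HFrac_field; simp add: D_add D_mult D_uminus)+

lemma L_field: "is_subfield LL" and L_inv: "x \<in> LL \<Longrightarrow> inverse x \<in> LL"
  by (rule HFrac_field; simp)+

lemma L_add: "x \<in> LL \<Longrightarrow> y \<in> LL \<Longrightarrow> x + y \<in> LL"
  using L_field unfolding is_subfield_def by blast
lemma L_mult: "x \<in> LL \<Longrightarrow> y \<in> LL \<Longrightarrow> x * y \<in> LL"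
  using L_field unfolding is_subfield_def by blast
lemma L_0: "0 \<in> LL"
  using L_field unfolding is_subfield_def by blast
lemma K_0: "0 \<in> KK"
  using K_field unfolding is_subfield_def by blast

lemma K_sub_L: "KK \<subseteq> LL"
proof
  fix x assume "x \<in> KK"
  then obtain b s i where "x = Fraction_Field.Fract b s" "b \<in> Bg i" "s \<in> Bg i" "s \<noteq> 0"
    by (rule HFrac_memE)
  then show "x \<in> LL" using HFrac_memI[of b UNIV s i] by simp
qed

lemma rd_in: "r * d \<in> Bg \<gamma>"
  using mult_in[OF r_in d_in] rho_eq by simp

lemma t_in: "t \<in> LL"
  unfolding t_def using HFrac_memI[of "r * d" UNIV c \<gamma>] rd_in c_in c_ne by simp

lemma poly_in_L: "poly_over KK p \<Longrightarrow> poly p t \<in> LL"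
proof (induction p)
  case 0 then show ?case using L_0 by simp
next
  case (pCons a p)
  have "a \<in> KK" using pCons.prems unfolding poly_over_def by (metis coeff_pCons_0)
  then have aL: "a \<in> LL" using K_sub_L by blast
  have "poly_over KK p" using pCons.prems unfolding poly_over_def by (metis coeff_pCons_Suc)
  then have "poly p t \<in> LL" by (rule pCons.IH)
  then show ?case using aL t_in by (simp add: L_add L_mult)
qed

lemma trans_t:
  assumes over: "poly_over KK p" and z: "poly p t = 0"
  shows "p = 0"
proof -
  have ex: "\<forall>j. \<exists>xy. coeff p j = Fraction_Field.Fract (fst xy) (snd xy) \<and> D (fst xy) = 0 \<and> D (snd xy) = 0 \<and> snd xy \<noteq> 0"
  proof
    fix j
    have "coeff p j \<in> KK" using over unfolding poly_over_def by blast
    then obtain b s i where "coeff p j = Fraction_Field.Fract b s" "D b = 0" "D s = 0" "s \<noteq> 0"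
      by (rule HFrac_memE) auto
    then show "\<exists>xy. coeff p j = Fraction_Field.Fract (fst xy) (snd xy) \<and> D (fst xy) = 0 \<and> D (snd xy) = 0 \<and> snd xy \<noteq> 0"
      by (intro exI[of _ "(b, s)"]) simp
  qed
  obtain F where F: "\<And>j. coeff p j = Fraction_Field.Fract (fst (F j)) (snd (F j)) \<and> D (fst (F j)) = 0 \<and> D (snd (F j)) = 0 \<and> snd (F j) \<noteq> 0"
    using choice[OF ex] by blast
  define X where "X j = fst (F j)" for j
  define Y where "Y j = snd (F j)" for j
  have cX: "coeff p j = fr (X j) / fr (Y j)" for j
    using F[of j] unfolding X_def Y_def by (simp add: Fract_div)
  have DX: "D (X j) = 0" and DY: "D (Y j) = 0" and Yne: "Y j \<noteq> 0" for j
    using F[of j] unfolding X_def Y_def by auto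
  define n where "n = degree p"
  define Yp where "Yp = (\<Prod>k\<le>n. Y k)"
  define z where "z j = X j * (\<Prod>k\<in>{..n} - {j}. Y k)" for j
  have Yp_ne: "Yp \<noteq> 0" unfolding Yp_def using Yne by simp
  have Dz: "D (z j) = 0" for j unfolding z_def using DX DY by (simp add: ker_mult ker_prod)
  have key1: "fr Yp * coeff p j = fr (z j)" if j: "j \<le> n" for j
  proof -
    have "Yp = Y j * (\<Prod>k\<in>{..n} - {j}. Y k)" unfolding Yp_def using j by (simp add: prod.remove)
    then show ?thesis using Yne[of j] unfolding z_def cX by (simp add: fr_mult)
  qed
  define Z where "Z = (\<Sum>j\<le>n. monom (z j * d ^ j * c ^ (n - j)) j)"
  have cZ: "coeff Z j = (if j \<le> n then z j * d ^ j * c ^ (n - j) else 0)" for j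
    unfolding Z_def by (rule coeff_sum_monom_gen)
  have "fr (poly Z r) = (\<Sum>j\<le>n. fr (z j) * fr d ^ j * fr c ^ (n - j) * fr r ^ j)"
    unfolding Z_def by (simp add: poly_sum poly_monom fr_sum fr_mult fr_pow)
  also have "\<dots> = (\<Sum>j\<le>n. fr Yp * fr c ^ n * (coeff p j * t ^ j))"
  proof (rule sum.cong[OF refl])
    fix j assume "j \<in> {..n}"
    then have j: "j \<le> n" by simp
    have "fr (z j) * fr d ^ j * fr c ^ (n - j) * fr r ^ j = (fr Yp * coeff p j) * fr d ^ j * fr c ^ (n - j) * fr r ^ j"
      using key1[OF j] by simp
    also have "\<dots> = fr Yp * fr c ^ n * (coeff p j * (fr r * fr d / fr c) ^ j)"
      by (rule fid2) (use c_ne j in simp_all)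
    finally show "fr (z j) * fr d ^ j * fr c ^ (n - j) * fr r ^ j = fr Yp * fr c ^ n * (coeff p j * t ^ j)"
      by (simp add: t_eq fr_mult)
  qed
  also have "\<dots> = fr Yp * fr c ^ n * poly p t"
    by (simp add: sum_distrib_left[symmetric] poly_sum_le[of p n] n_def)
  also have "\<dots> = 0" using z by simp
  finally have "poly Z r = 0" by simp
  moreover have "\<And>j. D (coeff Z j) = 0" unfolding cZ using Dz by (simp add: ker_mult ker_pow Dc Dd)
  ultimately have Z0: "Z = 0" using transcendental by blast
  show "p = 0"
  proof (rule poly_eqI)
    fix j
    show "coeff p j = coeff 0 j"
    proof (cases "j \<le> n")
      case True
      then have "z j * d ^ j * c ^ (n - j) = 0" using cZ[of j] Z0 by simp
      then have "z j = 0" using c_ne d_ne by simp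
      then have "fr Yp * coeff p j = 0" using key1[OF True] by simp
      then show ?thesis using Yp_ne by simp
    next
      case False
      then show ?thesis by (simp add: n_def coeff_eq_0)
    qed
  qed
qed

end

context mainloc
begin

lemma L_sub:
  assumes b_in: "b \<in> Bg i" and s_in: "s \<in> Bg i" and s_ne: "s \<noteq> 0"
  shows "\<exists>p q. poly_over KK p \<and> poly_over KK q \<and> poly q t \<noteq> 0 \<and>
           Fraction_Field.Fract b s = poly p t / poly q t"
proof -
  obtain nb where "(D ^^ nb) b = 0" using D_lnd by blast
  from slice_lemma[OF this b_in] obtain e1 \<epsilon>1 P where P: "e1 \<in> Bg \<epsilon>1" "D e1 = 0" "e1 \<noteq> 0"
    "\<And>j. D (coeff P j) = 0 \<and> coeff P j * r ^ j \<in> Bg (\<epsilon>1 + i)" "e1 * b = poly P r" by blast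
  obtain ns where "(D ^^ ns) s = 0" using D_lnd by blast
  from slice_lemma[OF this s_in] obtain e2 \<epsilon>2 Q where Q: "e2 \<in> Bg \<epsilon>2" "D e2 = 0" "e2 \<noteq> 0"
    "\<And>j. D (coeff Q j) = 0 \<and> coeff Q j * r ^ j \<in> Bg (\<epsilon>2 + i)" "e2 * s = poly Q r" by blast
  define N where "N = degree P + degree Q"
  define \<Delta> where "\<Delta> = \<epsilon>1 + \<epsilon>2 + i + gmul N \<delta>"
  define num where "num j = e2 * coeff P j * c ^ j * d ^ (N - j)" for j
  define den where "den j = e1 * coeff Q j * c ^ j * d ^ (N - j)" for j
  have transfer: "X * (c ^ j * d ^ (N - j)) \<in> Bg \<Delta>"
    if j: "j \<le> N" and h: "X * r ^ j * d ^ N \<in> Bg \<Delta>" for X j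
  proof -
    let ?y = "(r * d) ^ j * d ^ (N - j)"
    have "d ^ j * d ^ (N - j) = d ^ N" using j by (simp add: power_add[symmetric])
    then have yeq: "X * ?y = X * r ^ j * d ^ N" by (simp add: power_mult_distrib ac_simps)
    have y_in: "?y \<in> Bg (gmul j \<gamma> + gmul (N - j) \<delta>)"
      by (intro mult_in pow_in_exact rd_in d_in)
    have z_in: "c ^ j * d ^ (N - j) \<in> Bg (gmul j \<gamma> + gmul (N - j) \<delta>)"
      by (intro mult_in pow_in_exact c_in d_in)
    have yne: "?y \<noteq> 0" using r_ne d_ne by simp
    have "X * ?y \<in> Bg \<Delta>" using h by (simp only: yeq)
    from hom_transfer[OF this y_in yne z_in] show ?thesis .
  qed
  have num_in: "num j \<in> Bg \<Delta>" if j: "j \<le> N" for j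
  proof -
    have "e2 * (coeff P j * r ^ j) * d ^ N \<in> Bg (\<epsilon>2 + (\<epsilon>1 + i) + gmul N \<delta>)"
      using mult_in[OF mult_in[OF Q(1) conjunct2[OF P(4)[of j]]] pow_in_exact[OF d_in]] .
    moreover have "\<epsilon>2 + (\<epsilon>1 + i) + gmul N \<delta> = \<Delta>" unfolding \<Delta>_def by (simp add: algebra_simps)
    ultimately have "(e2 * coeff P j) * r ^ j * d ^ N \<in> Bg \<Delta>" by (simp add: ac_simps)
    from transfer[OF j this] show ?thesis unfolding num_def by (simp add: ac_simps)
  qed
  have den_in: "den j \<in> Bg \<Delta>" if j: "j \<le> N" for j
  proof -
    have "e1 * (coeff Q j * r ^ j) * d ^ N \<in> Bg (\<epsilon>1 + (\<epsilon>2 + i) + gmul N \<delta>)"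
      using mult_in[OF mult_in[OF P(1) conjunct2[OF Q(4)[of j]]] pow_in_exact[OF d_in]] .
    moreover have "\<epsilon>1 + (\<epsilon>2 + i) + gmul N \<delta> = \<Delta>" unfolding \<Delta>_def by (simp add: algebra_simps)
    ultimately have "(e1 * coeff Q j) * r ^ j * d ^ N \<in> Bg \<Delta>" by (simp add: ac_simps)
    from transfer[OF j this] show ?thesis unfolding den_def by (simp add: ac_simps)
  qed
  have Dnum: "D (num j) = 0" for j
    unfolding num_def using P(4)[of j] Q(2) by (simp add: ker_mult ker_pow Dc Dd)
  have Dden: "D (den j) = 0" for j
    unfolding den_def using Q(4)[of j] P(2) by (simp add: ker_mult ker_pow Dc Dd)
  have Q_ne: "Q \<noteq> 0" using Q(5) Q(3) s_ne by auto
  define w where "w = den (degree Q)"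
  have w_ne: "w \<noteq> 0" unfolding w_def den_def
    using P(3) leading_coeff_neq_0[OF Q_ne] c_ne d_ne by simp
  have w_in: "w \<in> Bg \<Delta>" unfolding w_def by (rule den_in) (simp add: N_def)
  have Dw: "D w = 0" unfolding w_def by (rule Dden)
  define P' where "P' = (\<Sum>j\<le>N. monom (Fraction_Field.Fract (num j) w) j)"
  define Q' where "Q' = (\<Sum>j\<le>N. monom (Fraction_Field.Fract (den j) w) j)"
  have overP: "poly_over KK P'"
    unfolding poly_over_def P'_def coeff_sum_monom_gen
  proof
    fix n show "(if n \<le> N then Fraction_Field.Fract (num n) w else 0) \<in> KK"
      using HFrac_memI[of "num n" "{b. D b = 0}" w \<Delta>] num_in[of n] Dnum Dw w_in w_ne K_0 by auto
  qed
  have overQ: "poly_over KK Q'"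
    unfolding poly_over_def Q'_def coeff_sum_monom_gen
  proof
    fix n show "(if n \<le> N then Fraction_Field.Fract (den n) w else 0) \<in> KK"
      using HFrac_memI[of "den n" "{b. D b = 0}" w \<Delta>] den_in[of n] Dden Dw w_in w_ne K_0 by auto
  qed
  have gen: "poly (\<Sum>j\<le>N. monom (Fraction_Field.Fract (e * coeff R j * c ^ j * d ^ (N - j)) w) j) t
      = fr (e * d ^ N) / fr w * fr (poly R r)" if R: "degree R \<le> N" for e R
  proof -
    have "poly (\<Sum>j\<le>N. monom (Fraction_Field.Fract (e * coeff R j * c ^ j * d ^ (N - j)) w) j) t
       = (\<Sum>j\<le>N. Fraction_Field.Fract (e * coeff R j * c ^ j * d ^ (N - j)) w * t ^ j)"
      by (simp add: poly_sum poly_monom)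
    also have "\<dots> = (\<Sum>j\<le>N. fr (e * d ^ N) / fr w * fr (coeff R j * r ^ j))"
    proof (rule sum.cong[OF refl])
      fix j assume "j \<in> {..N}"
      then have j: "j \<le> N" by simp
      have "Fraction_Field.Fract (e * coeff R j * c ^ j * d ^ (N - j)) w * t ^ j =
          (fr e * fr (coeff R j) * fr c ^ j * fr d ^ (N - j)) / fr w * (fr r * fr d / fr c) ^ j"
        by (simp add: Fract_div[OF w_ne] t_eq fr_mult fr_pow)
      also have "\<dots> = fr e * fr d ^ N / fr w * (fr (coeff R j) * fr r ^ j)"
        by (rule fid1) (use c_ne j in simp_all)
      also have "\<dots> = fr (e * d ^ N) / fr w * fr (coeff R j * r ^ j)"
        by (simp add: fr_mult fr_pow)
      finally show "Fraction_Field.Fract (e * coeff R j * c ^ j * d ^ (N - j)) w * t ^ j =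
          fr (e * d ^ N) / fr w * fr (coeff R j * r ^ j)" .
    qed
    also have "\<dots> = fr (e * d ^ N) / fr w * (\<Sum>j\<le>N. fr (coeff R j * r ^ j))"
      by (rule sum_distrib_left[symmetric])
    also have "\<dots> = fr (e * d ^ N) / fr w * fr (poly R r)"
      by (simp only: poly_sum_le[OF R] fr_sum)
    finally show ?thesis .
  qed
  have pP: "poly P' t = fr (e2 * d ^ N) / fr w * fr (e1 * b)"
    unfolding P'_def num_def using gen[of P e2] P(5) by (simp add: N_def)
  have pQ: "poly Q' t = fr (e1 * d ^ N) / fr w * fr (e2 * s)"
    unfolding Q'_def den_def using gen[of Q e1] Q(5) by (simp add: N_def)
  have Qt_ne: "poly Q' t \<noteq> 0" unfolding pQ using P(3) Q(3) d_ne w_ne s_ne by simp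
  have "Fraction_Field.Fract b s = poly P' t / poly Q' t"
    unfolding pP pQ Fract_div[OF s_ne] using P(3) Q(3) d_ne w_ne s_ne
    by (simp add: fr_mult fr_pow field_simps)
  then show ?thesis using overP overQ Qt_ne by blast
qed

theorem main_a: "purely_transcendental_deg1 KK LL"
  unfolding purely_transcendental_deg1_def
proof (intro conjI K_sub_L bexI[of _ t] t_in allI impI)
  fix p assume "poly_over KK p \<and> poly p t = 0"
  then show "p = 0" using trans_t by blast
next
  show "LL = {poly p t / poly q t |p q. poly_over KK p \<and> poly_over KK q \<and> poly q t \<noteq> 0}"
  proof
    show "LL \<subseteq> {poly p t / poly q t |p q. poly_over KK p \<and> poly_over KK q \<and> poly q t \<noteq> 0}"
    proof
      fix x assume "x \<in> LL"
      then obtain b s i where "x = Fraction_Field.Fract b s" "b \<in> Bg i" "s \<in> Bg i" "s \<noteq> 0"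
        by (rule HFrac_memE)
      then show "x \<in> {poly p t / poly q t |p q. poly_over KK p \<and> poly_over KK q \<and> poly q t \<noteq> 0}"
        using L_sub by blast
    qed
  next
    show "{poly p t / poly q t |p q. poly_over KK p \<and> poly_over KK q \<and> poly q t \<noteq> 0} \<subseteq> LL"
    proof clarify
      fix p q assume "poly_over KK p" "poly_over KK q" "poly q t \<noteq> 0"
      then have "poly p t \<in> LL" "inverse (poly q t) \<in> LL" using poly_in_L L_inv by auto
      then show "poly p t / poly q t \<in> LL" by (simp add: divide_inverse L_mult)
    qed
  qed
qed

end

section \<open>Orderability of torsion-free abelian groups\<close>

definition cone :: "'g::ab_group_add set \<Rightarrow> bool" where
  "cone P \<longleftrightarrow> 0 \<notin> P \<and> (\<forall>x\<in>P. \<forall>y\<in>P. x + y \<in> P)"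

lemma cone_gmul: "cone P \<Longrightarrow> p \<in> P \<Longrightarrow> gmul (Suc n) p \<in> P"
  by (induction n) (auto simp: cone_def)

lemma levi:
  fixes dummy :: "'g::ab_group_add itself"
  assumes tf: "torsion_free_group TYPE('g)"
  shows "\<exists>P::'g set. cone P \<and> (\<forall>x. x \<noteq> 0 \<longrightarrow> x \<in> P \<or> - x \<in> P)"
proof -
  have tf': "\<And>(g::'g) n. n > 0 \<Longrightarrow> gmul n g = 0 \<Longrightarrow> g = 0"
    using tf unfolding torsion_free_group_def gmul_def by blast
  let ?A = "{P::'g set. cone P}"
  have "\<forall>C\<in>chains ?A. \<Union>C \<in> ?A"
  proof
    fix C assume C: "C \<in> chains ?A"
    then have sub: "C \<subseteq> ?A" and ch: "\<forall>X\<in>C. \<forall>Y\<in>C. X \<subseteq> Y \<or> Y \<subseteq> X"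
      unfolding chains_def chain_subset_def by auto
    have "0 \<notin> \<Union>C" using sub unfolding cone_def by auto
    moreover have "x + y \<in> \<Union>C" if hxy: "x \<in> \<Union>C" "y \<in> \<Union>C" for x y
    proof -
      obtain X Y where XY: "X \<in> C" "Y \<in> C" "x \<in> X" "y \<in> Y" using hxy by blast
      show ?thesis
      proof (cases "X \<subseteq> Y")
        case True
        then have "x + y \<in> Y" using XY sub unfolding cone_def by blast
        then show ?thesis using XY by blast
      next
        case False
        then have "Y \<subseteq> X" using ch XY by blast
        then have "x + y \<in> X" using XY sub unfolding cone_def by blast
        then show ?thesis using XY by blast
      qed
    qed
    ultimately show "\<Union>C \<in> ?A" unfolding cone_def by blast
  qed
  from Zorn_Lemma[OF this] obtain M :: "'g set" where M: "cone M" and max: "\<And>X. cone X \<Longrightarrow> M \<subseteq> X \<Longrightarrow> X = M"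
    by blast
  define E where "E x = {p + gmul n x | p n. p \<in> insert 0 M \<and> (p \<in> M \<or> n > 0)}" for x
  have M_add: "\<And>x y. x \<in> M \<Longrightarrow> y \<in> M \<Longrightarrow> x + y \<in> M" and M0: "0 \<notin> M"
    using M unfolding cone_def by auto
  have E_add: "u + v \<in> E x" if huv: "u \<in> E x" "v \<in> E x" for u v x
  proof -
    obtain p n where 1: "u = p + gmul n x" "p \<in> insert 0 M" "p \<in> M \<or> n > 0" using huv(1) unfolding E_def by blast
    obtain q m where 2: "v = q + gmul m x" "q \<in> insert 0 M" "q \<in> M \<or> m > 0" using huv(2) unfolding E_def by blast
    have "u + v = (p + q) + gmul (n + m) x" using 1 2 by (simp add: gmul_add algebra_simps)
    moreover have "p + q \<in> insert 0 M" using 1 2 M_add by auto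
    moreover have "p + q \<in> M \<or> n + m > 0" using 1 2 M_add by auto
    ultimately show ?thesis unfolding E_def by blast
  qed
  have M_E: "M \<subseteq> E x" for x
  proof
    fix p assume "p \<in> M" then show "p \<in> E x" unfolding E_def by (intro CollectI exI[of _ p] exI[of _ 0]) simp
  qed
  have x_E: "x \<in> E x" for x
    unfolding E_def by (intro CollectI exI[of _ 0] exI[of _ 1]) simp
  have E0: "\<exists>p m. p \<in> M \<and> m > 0 \<and> p + gmul m x = 0" if hx0: "x \<noteq> 0" "0 \<in> E x" for x
  proof -
    obtain p n where 1: "0 = p + gmul n x" "p \<in> insert 0 M" "p \<in> M \<or> n > 0" using hx0(2) unfolding E_def by blast
    show ?thesis
    proof (cases "p = 0")
      case True
      then have "gmul n x = 0" "n > 0" using 1 M0 by auto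
      then show ?thesis using tf' hx0(1) by blast
    next
      case False
      then have "p \<in> M" using 1 by auto
      moreover have "n > 0" using 1 M0 \<open>p \<in> M\<close> by (cases n) auto
      ultimately show ?thesis using 1 by metis
    qed
  qed
  have "x \<in> M \<or> - x \<in> M" if x: "x \<noteq> 0" for x
  proof (rule ccontr)
    assume nx: "\<not> (x \<in> M \<or> - x \<in> M)"
    have "\<not> cone (E x)"
    proof
      assume "cone (E x)"
      then have "E x = M" using max M_E by blast
      then show False using x_E nx by blast
    qed
    then have "0 \<in> E x" using E_add unfolding cone_def by blast
    then obtain p n where p: "p \<in> M" "n > 0" "p + gmul n x = 0" using E0 x by blast
    have "\<not> cone (E (- x))"
    proof
      assume "cone (E (- x))"
      then have "E (- x) = M" using max M_E by blast
      then show False using x_E[of "-x"] nx by blast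
    qed
    then have "0 \<in> E (- x)" using E_add unfolding cone_def by blast
    then obtain q m where q: "q \<in> M" "m > 0" "q + gmul m (- x) = 0" using E0[of "-x"] x by auto
    have pe: "p = - gmul n x" using p(3) by (simp add: eq_neg_iff_add_eq_0)
    have qe: "q = gmul m x" using q(3) by (simp add: gmul_minus)
    have "gmul m p \<in> M" using cone_gmul[OF M p(1), of "m - 1"] q(2) by simp
    moreover have "gmul n q \<in> M" using cone_gmul[OF M q(1), of "n - 1"] p(2) by simp
    ultimately have "gmul m p + gmul n q \<in> M" by (rule M_add)
    moreover have "gmul m p + gmul n q = 0"
      unfolding pe qe by (simp add: gmul_minus gmul_mult[symmetric] mult.commute)
    ultimately show False using M0 by simp
  qed
  then show ?thesis using M by blast
qed

lemma cone_max:
  assumes "cone P" "\<forall>x. x \<noteq> 0 \<longrightarrow> x \<in> P \<or> - x \<in> P" "finite S" "S \<noteq> {}"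
  shows "\<exists>m\<in>S. \<forall>s\<in>S. s = m \<or> m - s \<in> P"
  using assms(3,4)
proof (induction S rule: finite_ne_induct)
  case (singleton x) then show ?case by simp
next
  case (insert x F)
  then obtain m where m: "m \<in> F" "\<forall>s\<in>F. s = m \<or> m - s \<in> P" by blast
  have cl: "\<And>u v. u \<in> P \<Longrightarrow> v \<in> P \<Longrightarrow> u + v \<in> P" using assms(1) unfolding cone_def by blast
  show ?case
  proof (cases "x - m \<in> P")
    case True
    have "\<forall>s\<in>insert x F. s = x \<or> x - s \<in> P"
    proof
      fix s assume "s \<in> insert x F"
      then consider "s = x" | "s = m" | "m - s \<in> P" using m by blast
      then show "s = x \<or> x - s \<in> P"
      proof cases
        case 3
        then have "(x - m) + (m - s) \<in> P" using True cl by blast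
        then show ?thesis by simp
      qed (use True in auto)
    qed
    then show ?thesis by blast
  next
    case False
    then have "x = m \<or> m - x \<in> P" using assms(2)[rule_format, of "x - m"] by (auto simp: minus_diff_eq)
    then show ?thesis using m by blast
  qed
qed

lemma cone_min:
  assumes "cone P" "\<forall>x. x \<noteq> 0 \<longrightarrow> x \<in> P \<or> - x \<in> P" "finite S" "S \<noteq> {}"
  shows "\<exists>m\<in>S. \<forall>s\<in>S. s = m \<or> s - m \<in> P"
  using assms(3,4)
proof (induction S rule: finite_ne_induct)
  case (singleton x) then show ?case by simp
next
  case (insert x F)
  then obtain m where m: "m \<in> F" "\<forall>s\<in>F. s = m \<or> s - m \<in> P" by blast
  have cl: "\<And>u v. u \<in> P \<Longrightarrow> v \<in> P \<Longrightarrow> u + v \<in> P" using assms(1) unfolding cone_def by blast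
  show ?case
  proof (cases "m - x \<in> P")
    case True
    have "\<forall>s\<in>insert x F. s = x \<or> s - x \<in> P"
    proof
      fix s assume "s \<in> insert x F"
      then consider "s = x" | "s = m" | "s - m \<in> P" using m by blast
      then show "s = x \<or> s - x \<in> P"
      proof cases
        case 3
        then have "(s - m) + (m - x) \<in> P" using True cl by blast
        then show ?thesis by simp
      qed (use True in auto)
    qed
    then show ?thesis by blast
  next
    case False
    then have "x = m \<or> x - m \<in> P" using assms(2)[rule_format, of "m - x"] by (auto simp: minus_diff_eq)
    then show ?thesis using m by blast
  qed
qed

lemma cone_add2:
  assumes "cone P" "u = 0 \<or> u \<in> P" "v = 0 \<or> v \<in> P" "u \<noteq> 0 \<or> v \<noteq> 0"
  shows "u + v \<in> P"
proof -
  have cl: "u \<in> P \<Longrightarrow> v \<in> P \<Longrightarrow> u + v \<in> P" using assms(1) unfolding cone_def by blast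
  show ?thesis
  proof (cases "u = 0")
    case True then show ?thesis using assms(3,4) by simp
  next
    case False
    then have u: "u \<in> P" using assms(2) by simp
    show ?thesis
    proof (cases "v = 0")
      case True then show ?thesis using u by simp
    next
      case False then show ?thesis using u assms(3) cl by simp
    qed
  qed
qed

context graded
begin

lemma hc_mult_general:
  "hc (x * y) k = (\<Sum>gh\<in>{g. hc x g \<noteq> 0} \<times> {h. hc y h \<noteq> 0}.
       if fst gh + snd gh = k then hc x (fst gh) * hc y (snd gh) else 0)"
proof -
  let ?Sx = "{g. hc x g \<noteq> 0}" and ?Sy = "{h. hc y h \<noteq> 0}"
  have x: "x = sum (hc x) ?Sx" and y: "y = sum (hc y) ?Sy"
    by (rule hc_sum[OF hc_finite]; simp)+
  have "x * y = sum (hc x) ?Sx * sum (hc y) ?Sy" using x y by (rule arg_cong2[where f = "(*)"])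
  also have "\<dots> = (\<Sum>gh\<in>?Sx \<times> ?Sy. hc x (fst gh) * hc y (snd gh))"
    unfolding sum_product sum.cartesian_product by (simp add: case_prod_beta)
  finally have xy: "x * y = (\<Sum>gh\<in>?Sx \<times> ?Sy. hc x (fst gh) * hc y (snd gh))" .
  have "hc (x * y) k = (\<Sum>gh\<in>?Sx \<times> ?Sy. hc (hc x (fst gh) * hc y (snd gh)) k)"
    unfolding xy by (simp only: hc_sum_fun)
  also have "\<dots> = (\<Sum>gh\<in>?Sx \<times> ?Sy. if fst gh + snd gh = k then hc x (fst gh) * hc y (snd gh) else 0)"
    by (intro sum.cong refl) (auto simp: hc_hom[OF mult_in[OF hc_in hc_in]])
  finally show ?thesis .
qed

lemma hc_mult_top:
  assumes a: "hc x a \<noteq> 0" and b: "hc y b \<noteq> 0"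
    and uniq: "\<And>g h. hc x g \<noteq> 0 \<Longrightarrow> hc y h \<noteq> 0 \<Longrightarrow> g + h = a + b \<Longrightarrow> g = a \<and> h = b"
  shows "hc (x * y) (a + b) = hc x a * hc y b"
proof -
  let ?S = "{g. hc x g \<noteq> 0} \<times> {h. hc y h \<noteq> 0}"
  have "hc (x * y) (a + b) = (\<Sum>gh\<in>?S. if gh = (a, b) then hc x a * hc y b else 0)"
    unfolding hc_mult_general
    by (intro sum.cong refl) (use uniq in \<open>auto split: if_splits\<close>)
  also have "\<dots> = hc x a * hc y b"
    using a b hc_finite by (simp add: sum.delta')
  finally show ?thesis .
qed

lemma units_hom:
  fixes P :: "'g set"
  assumes P: "cone P" "\<forall>x. x \<noteq> 0 \<longrightarrow> x \<in> P \<or> - x \<in> P"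
    and xy: "x * y \<in> Bg g0" and x0: "x \<noteq> 0" and y0: "y \<noteq> 0"
  shows "\<exists>i. x \<in> Bg i"
proof -
  have cl: "\<And>u v. u \<in> P \<Longrightarrow> v \<in> P \<Longrightarrow> u + v \<in> P" and P0: "0 \<notin> P"
    using P(1) unfolding cone_def by blast+
  let ?Sx = "{g. hc x g \<noteq> 0}" and ?Sy = "{h. hc y h \<noteq> 0}"
  have nex: "?Sx \<noteq> {}"
  proof
    assume "?Sx = {}" then have "x = sum (hc x) {}" by (intro hc_sum) auto
    then show False using x0 by simp
  qed
  have ney: "?Sy \<noteq> {}"
  proof
    assume "?Sy = {}" then have "y = sum (hc y) {}" by (intro hc_sum) auto
    then show False using y0 by simp
  qed
  obtain a where a: "a \<in> ?Sx" "\<forall>s\<in>?Sx. s = a \<or> a - s \<in> P" using cone_max[OF P hc_finite nex] by blast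
  obtain b where b: "b \<in> ?Sy" "\<forall>s\<in>?Sy. s = b \<or> b - s \<in> P" using cone_max[OF P hc_finite ney] by blast
  obtain a' where a': "a' \<in> ?Sx" "\<forall>s\<in>?Sx. s = a' \<or> s - a' \<in> P" using cone_min[OF P hc_finite nex] by blast
  obtain b' where b': "b' \<in> ?Sy" "\<forall>s\<in>?Sy. s = b' \<or> s - b' \<in> P" using cone_min[OF P hc_finite ney] by blast
  have hxy: "hc (x * y) k = 0" if "k \<noteq> g0" for k using hc_hom[OF xy] that by simp
  have top: "hc (x * y) (a + b) = hc x a * hc y b"
  proof (rule hc_mult_top)
    show "hc x a \<noteq> 0" "hc y b \<noteq> 0" using a b by auto
    fix g h assume g: "hc x g \<noteq> 0" and h: "hc y h \<noteq> 0" and e: "g + h = a + b"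
    show "g = a \<and> h = b"
    proof (rule ccontr)
      assume ne: "\<not> (g = a \<and> h = b)"
      have "(a - g) + (b - h) \<in> P"
      proof (rule cone_add2[OF P(1)])
        show "a - g = 0 \<or> a - g \<in> P" using a(2) g by auto
        show "b - h = 0 \<or> b - h \<in> P" using b(2) h by auto
        show "a - g \<noteq> 0 \<or> b - h \<noteq> 0" using ne by auto
      qed
      moreover have "(a - g) + (b - h) = 0" using e by (simp add: algebra_simps)
      ultimately show False using P0 by simp
    qed
  qed
  have bot: "hc (x * y) (a' + b') = hc x a' * hc y b'"
  proof (rule hc_mult_top)
    show "hc x a' \<noteq> 0" "hc y b' \<noteq> 0" using a' b' by auto
    fix g h assume g: "hc x g \<noteq> 0" and h: "hc y h \<noteq> 0" and e: "g + h = a' + b'"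
    show "g = a' \<and> h = b'"
    proof (rule ccontr)
      assume ne: "\<not> (g = a' \<and> h = b')"
      have "(g - a') + (h - b') \<in> P"
      proof (rule cone_add2[OF P(1)])
        show "g - a' = 0 \<or> g - a' \<in> P" using a'(2) g by auto
        show "h - b' = 0 \<or> h - b' \<in> P" using b'(2) h by auto
        show "g - a' \<noteq> 0 \<or> h - b' \<noteq> 0" using ne by auto
      qed
      moreover have "(g - a') + (h - b') = 0" using e by (simp add: algebra_simps)
      ultimately show False using P0 by simp
    qed
  qed
  have "hc x a * hc y b \<noteq> 0" using a(1) b(1) by simp
  then have "a + b = g0" using top hxy[of "a + b"] by auto
  moreover have "hc x a' * hc y b' \<noteq> 0" using a'(1) b'(1) by simp
  then have "a' + b' = g0" using bot hxy[of "a' + b'"] by auto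
  ultimately have eqs: "(a + b) - (a' + b') = 0" by simp
  have aa: "a = a'"
  proof (rule ccontr)
    assume ne: "a \<noteq> a'"
    then have "a - a' \<in> P" using a(2) a'(1) by auto
    moreover have "b - b' = 0 \<or> b - b' \<in> P" using b(2) b'(1) by auto
    ultimately have "(a - a') + (b - b') \<in> P" using P0 by (intro cone_add2[OF P(1)]) auto
    moreover have eqd: "(a + b) - (a' + b') = (a - a') + (b - b')" by (simp add: algebra_simps)
    ultimately have "(a + b) - (a' + b') \<in> P" by (simp only: eqd)
    then show False using eqs P0 by simp
  qed
  have "x \<in> Bg a"
  proof (rule hom_of_comp)
    fix g assume g: "g \<noteq> a"
    show "hc x g = 0"
    proof (rule ccontr)
      assume "hc x g \<noteq> 0"
      then have "a - g \<in> P" "g - a \<in> P" using a(2) a'(2) aa g by auto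
      then have "(a - g) + (g - a) \<in> P" using cl by blast
      then show False using P0 by simp
    qed
  qed
  then show ?thesis by blast
qed

lemma field_in_B0:
  assumes tf: "torsion_free_group TYPE('g)" and k: "is_subfield k"
  shows "k \<subseteq> Bg 0"
proof
  obtain P :: "'g set" where P: "cone P" "\<forall>x. x \<noteq> 0 \<longrightarrow> x \<in> P \<or> - x \<in> P"
    using levi[OF tf] by blast
  have inv: "\<And>x. x \<in> k \<Longrightarrow> x \<noteq> 0 \<Longrightarrow> \<exists>y. x * y = 1 \<and> y \<noteq> 0"
    using k unfolding is_subfield_def by fastforce
  have hom: "\<exists>i. x \<in> Bg i" if hx: "x \<in> k" "x \<noteq> 0" for x
  proof -
    obtain y where "x * y = 1" "y \<noteq> 0" using inv hx by blast
    then show ?thesis using units_hom[OF P, of x y 0] hx by simp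
  qed
  fix x assume x: "x \<in> k"
  show "x \<in> Bg 0"
  proof (cases "x = 0")
    case True then show ?thesis by simp
  next
    case False
    then obtain i where i: "x \<in> Bg i" using hom x by blast
    have k1: "1 + x \<in> k" using k x unfolding is_subfield_def by blast
    show ?thesis
    proof (cases "1 + x = 0")
      case True
      then have "x = - 1" by (simp add: add_eq_0_iff)
      then show ?thesis using uminus_in[OF one_in] by simp
    next
      case False
      then obtain j where j: "1 + x \<in> Bg j" using hom k1 by blast
      show ?thesis
      proof (rule ccontr)
        assume "x \<notin> Bg 0"
        then have i0: "i \<noteq> 0" using i by auto
        have h: "hc (1 + x) g = hc 1 g + hc x g" for g by (simp add: hc_add)
        have "hc (1 + x) 0 = 1" using h[of 0] hc_hom[OF one_in] hc_hom[OF i] i0 by simp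
        then have "0 = j" using hc_hom[OF j] by (auto split: if_splits)
        moreover have "hc (1 + x) i = x" using h[of i] hc_hom[OF one_in] hc_hom[OF i] i0 by simp
        then have "i = j" using hc_hom[OF j] \<open>x \<noteq> 0\<close> by (auto split: if_splits)
        ultimately show False using i0 by simp
      qed
    qed
  qed
qed

end

context lnd
begin

lemma part_b:
  assumes k: "is_subfield k"
  shows "is_subfield (k \<inter> Bg 0) \<and>
         (\<lambda>x. Fraction_Field.Fract x 1) ` (k \<inter> Bg 0) \<subseteq> HFrac Bg {b. D b = 0}"
proof
  have kk: "0 \<in> k" "1 \<in> k" "\<And>x y. x \<in> k \<Longrightarrow> y \<in> k \<Longrightarrow> x + y \<in> k \<and> x * y \<in> k \<and> - x \<in> k"
    "\<And>x. x \<in> k \<Longrightarrow> x \<noteq> 0 \<Longrightarrow> \<exists>y\<in>k. x * y = 1"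
    using k unfolding is_subfield_def by blast+
  show "is_subfield (k \<inter> Bg 0)"
    unfolding is_subfield_def
  proof (intro conjI ballI impI)
    show "0 \<in> k \<inter> Bg 0" "1 \<in> k \<inter> Bg 0" using kk by auto
    fix x y assume x: "x \<in> k \<inter> Bg 0" and y: "y \<in> k \<inter> Bg 0"
    show "x + y \<in> k \<inter> Bg 0" using x y kk(3) add_in by auto
    show "x * y \<in> k \<inter> Bg 0" using x y kk(3) mult_in[of x 0 y 0] by auto
    show "- x \<in> k \<inter> Bg 0" using x y kk(3) uminus_in by auto
  next
    fix x assume x: "x \<in> k \<inter> Bg 0" "x \<noteq> 0"
    then obtain y where y: "y \<in> k" "x * y = 1" using kk(4) by blast
    then have "y * x \<in> Bg 0" by (simp add: mult.commute)
    then have "y \<in> Bg (0 - 0)" using x by (intro hom_cancel[of y x 0 0]) auto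
    then show "\<exists>y\<in>k \<inter> Bg 0. x * y = 1" using y by auto
  qed
  show "(\<lambda>x. Fraction_Field.Fract x 1) ` (k \<inter> Bg 0) \<subseteq> HFrac Bg {b. D b = 0}"
  proof clarify
    fix x assume x: "x \<in> k" "x \<in> Bg 0"
    have "D x = 0"
    proof (cases "x = 0")
      case False
      then obtain y where "x * y = 1" using kk(4) x by blast
      then show ?thesis by (rule unit_ker)
    qed simp
    then show "Fraction_Field.Fract x 1 \<in> HFrac Bg {b. D b = 0}"
      using HFrac_memI[of x "{b. D b = 0}" 1 0] x by simp
  qed
qed

lemma gsupp_decomp:
  assumes G_eq: "Gsupp Bg {b. D b = 0} = Gsupp Bg UNIV" and r: "r \<in> Bg \<rho>" "r \<noteq> 0"
  shows "\<exists>c d \<gamma> \<delta>. c \<in> Bg \<gamma> \<and> d \<in> Bg \<delta> \<and> D c = 0 \<and> D d = 0 \<and> c \<noteq> 0 \<and> d \<noteq> 0 \<and> \<rho> = \<gamma> - \<delta>"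
proof -
  have rS: "\<rho> \<in> {g. \<exists>x \<in> UNIV \<inter> Bg g. x \<noteq> 0}" using r by blast
  have "\<rho> \<in> Gsupp Bg UNIV"
    unfolding Gsupp_def gen_subgroup_def
  proof (rule InterI)
    fix H assume "H \<in> {H. 0 \<in> H \<and> (\<forall>x\<in>H. \<forall>y\<in>H. x - y \<in> H) \<and> {g. \<exists>x \<in> UNIV \<inter> Bg g. x \<noteq> 0} \<subseteq> H}"
    then have "{g. \<exists>x \<in> UNIV \<inter> Bg g. x \<noteq> 0} \<subseteq> H" by simp
    then show "\<rho> \<in> H" using rS by (rule subsetD)
  qed
  then have rho: "\<rho> \<in> gen_subgroup {g. \<exists>x \<in> {b. D b = 0} \<inter> Bg g. x \<noteq> 0}"
    using G_eq unfolding Gsupp_def by simp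
  define SA where "SA = {g. \<exists>x \<in> {b. D b = 0} \<inter> Bg g. x \<noteq> 0}"
  define H where "H = {u - v | u v. u \<in> SA \<and> v \<in> SA}"
  have SAI: "g \<in> SA" if "x \<in> Bg g" "D x = 0" "x \<noteq> 0" for x g
    unfolding SA_def using that by blast
  have SAE: "\<exists>x. x \<in> Bg g \<and> D x = 0 \<and> x \<noteq> 0" if "g \<in> SA" for g
    using that unfolding SA_def by blast
  have HI: "u - v \<in> H" if "u \<in> SA" "v \<in> SA" for u v
    unfolding H_def using that by blast
  have HE: "\<exists>u v. x = u - v \<and> u \<in> SA \<and> v \<in> SA" if "x \<in> H" for x
    using that unfolding H_def by blast
  have SA0: "0 \<in> SA" by (rule SAI[OF one_in]) auto
  have SAadd: "u + v \<in> SA" if huv: "u \<in> SA" "v \<in> SA" for u v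
  proof -
    obtain x where x: "x \<in> Bg u" "D x = 0" "x \<noteq> 0" using SAE[OF huv(1)] by blast
    obtain y where y: "y \<in> Bg v" "D y = 0" "y \<noteq> 0" using SAE[OF huv(2)] by blast
    show ?thesis
    proof (rule SAI)
      show "x * y \<in> Bg (u + v)" using x(1) y(1) by (rule mult_in)
      show "D (x * y) = 0" using x(2) y(2) by (rule ker_mult)
      show "x * y \<noteq> 0" using x(3) y(3) by simp
    qed
  qed
  have "H \<in> {H. 0 \<in> H \<and> (\<forall>x\<in>H. \<forall>y\<in>H. x - y \<in> H) \<and> SA \<subseteq> H}"
  proof (intro CollectI conjI ballI subsetI)
    show "0 \<in> H" using HI[OF SA0 SA0] by simp
    fix x y assume "x \<in> H" "y \<in> H"
    then obtain u1 v1 u2 v2 where e: "x = u1 - v1" "y = u2 - v2" "u1 \<in> SA" "v1 \<in> SA" "u2 \<in> SA" "v2 \<in> SA"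
      using HE by metis
    have "x - y = (u1 + v2) - (v1 + u2)" using e(1,2) by (simp add: algebra_simps)
    moreover have "(u1 + v2) - (v1 + u2) \<in> H" using HI[OF SAadd[OF e(3) e(6)] SAadd[OF e(4) e(5)]] .
    ultimately show "x - y \<in> H" by simp
  next
    fix x assume "x \<in> SA"
    then show "x \<in> H" using HI[OF _ SA0, of x] by simp
  qed
  moreover have "\<rho> \<in> gen_subgroup SA" using rho unfolding SA_def .
  ultimately have "\<rho> \<in> H" unfolding gen_subgroup_def by (rule InterD[rotated])
  then obtain \<gamma> \<delta> where gd: "\<rho> = \<gamma> - \<delta>" "\<gamma> \<in> SA" "\<delta> \<in> SA" using HE by metis
  obtain c where c: "c \<in> Bg \<gamma>" "D c = 0" "c \<noteq> 0" using SAE[OF gd(2)] by blast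
  obtain d where d: "d \<in> Bg \<delta>" "D d = 0" "d \<noteq> 0" using SAE[OF gd(3)] by blast
  show ?thesis using c d gd(1) by blast
qed

end

theorem theorem3p6:
  fixes Bg :: "'g::ab_group_add \<Rightarrow> 'b::{idom, ring_char_0} set"
    and D :: "'b \<Rightarrow> 'b"
  assumes grading: "is_grading Bg"
    and D_hlnd: "D \<in> HLND Bg"
    and D_nonzero: "D \<noteq> (\<lambda>_. 0)"
    and G_eq: "Gsupp Bg {b. D b = 0} = Gsupp Bg UNIV"
  shows "purely_transcendental_deg1 (HFrac Bg {b. D b = 0}) (HFrac Bg UNIV)
    \<and> (\<forall>k :: 'b set. is_subfield k \<longrightarrow>
           is_subfield (k \<inter> Bg 0) \<and>
           (\<lambda>x. Fraction_Field.Fract x 1) ` (k \<inter> Bg 0) \<subseteq> HFrac Bg {b. D b = 0})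
    \<and> (torsion_free_group TYPE('g) \<longrightarrow> (\<forall>k :: 'b set. is_subfield k \<longrightarrow>
           (\<lambda>x. Fraction_Field.Fract x 1) ` k \<subseteq> HFrac Bg {b. D b = 0} \<and>
           ruled ((\<lambda>x. Fraction_Field.Fract x 1) ` k) (HFrac Bg UNIV)))"
proof -
  interpret lnd Bg D using grading D_hlnd by (simp add: lnd_def lnd_axioms_def graded_def)
  obtain r \<rho> where r: "r \<in> Bg \<rho>" "D r \<noteq> 0" "D (D r) = 0"
    using exists_slice[OF D_nonzero] by blast
  interpret slice Bg D r \<rho> using r by unfold_locales
  obtain c d \<gamma> \<delta> where cd: "c \<in> Bg \<gamma>" "d \<in> Bg \<delta>" "D c = 0" "D d = 0" "c \<noteq> 0" "d \<noteq> 0" "\<rho> = \<gamma> - \<delta>"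
    using gsupp_decomp[OF G_eq r_in r_ne] by blast
  interpret mainloc Bg D r \<rho> c d \<gamma> \<delta> using cd by unfold_locales
  have A: "purely_transcendental_deg1 (HFrac Bg {b. D b = 0}) (HFrac Bg UNIV)" by (rule main_a)
  have B: "\<forall>k :: 'b set. is_subfield k \<longrightarrow>
           is_subfield (k \<inter> Bg 0) \<and>
           (\<lambda>x. Fraction_Field.Fract x 1) ` (k \<inter> Bg 0) \<subseteq> HFrac Bg {b. D b = 0}"
    using part_b by blast
  have C: "(\<lambda>x. Fraction_Field.Fract x 1) ` k \<subseteq> HFrac Bg {b. D b = 0} \<and>
           ruled ((\<lambda>x. Fraction_Field.Fract x 1) ` k) (HFrac Bg UNIV)"
    if tf: "torsion_free_group TYPE('g)" and k: "is_subfield k" for k :: "'b set"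
  proof -
    have "k \<inter> Bg 0 = k" using field_in_B0[OF tf k] by blast
    then have sub: "(\<lambda>x. Fraction_Field.Fract x 1) ` k \<subseteq> HFrac Bg {b. D b = 0}"
      using part_b[OF k] by simp
    moreover have "ruled ((\<lambda>x. Fraction_Field.Fract x 1) ` k) (HFrac Bg UNIV)"
      unfolding ruled_def using K_field sub K_sub_L A by blast
    ultimately show ?thesis by blast
  qed
  show ?thesis using A B C by blast
qed

end
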